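(* In any graph $G$, every nice stable set is a strong stable set.
   Context: A stable set is a set of pairwise non-adjacent vertices. A strong stable set is a stable set meeting every maximal (by inclusion) clique of $G$. Contracting vertices $x_1,\dots,x_k$ means deleting them and adding a new vertex adjacent to every remaining vertex that is adjacent to at least one of $x_1,\dots,x_k$. A nice stable set is a maximal (by inclusion) stable set $S$ together with a linear ordering $s_1,\dots,s_k$ of its elements such that for every $i\in\{2,\dots,k\}$, in the graph obtained from $G$ by contracting $s_1,\dots,s_{i-1}$ into a new vertex $w_{i-1}$, there is no induced path on four vertices with endpoints $w_{i-1}$ and $s_i$ (i.e. no chordless path $w_{i-1}$-$a$-$b$-$s_i$). *)

theory Defs
  imports Main
begin

text \<open>A (simple) graph is given by a finite vertex set V and a symmetric,
irreflexive adjacency relation E (only its restriction to V matters).\<close>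

definition graph :: "'a set \<Rightarrow> ('a \<Rightarrow> 'a \<Rightarrow> bool) \<Rightarrow> bool" where
  "graph V E \<longleftrightarrow> finite V \<and> (\<forall>x y. E x y \<longrightarrow> E y x) \<and> (\<forall>x. \<not> E x x)"

definition stable :: "'a set \<Rightarrow> ('a \<Rightarrow> 'a \<Rightarrow> bool) \<Rightarrow> 'a set \<Rightarrow> bool" where
  "stable V E S \<longleftrightarrow> S \<subseteq> V \<and> (\<forall>x\<in>S. \<forall>y\<in>S. \<not> E x y)"

definition maximal_stable :: "'a set \<Rightarrow> ('a \<Rightarrow> 'a \<Rightarrow> bool) \<Rightarrow> 'a set \<Rightarrow> bool" where
  "maximal_stable V E S \<longleftrightarrow> stable V E S \<and> (\<forall>T. stable V E T \<and> S \<subseteq> T \<longrightarrow> T = S)"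

definition clique :: "'a set \<Rightarrow> ('a \<Rightarrow> 'a \<Rightarrow> bool) \<Rightarrow> 'a set \<Rightarrow> bool" where
  "clique V E K \<longleftrightarrow> K \<subseteq> V \<and> (\<forall>x\<in>K. \<forall>y\<in>K. x \<noteq> y \<longrightarrow> E x y)"

definition maximal_clique :: "'a set \<Rightarrow> ('a \<Rightarrow> 'a \<Rightarrow> bool) \<Rightarrow> 'a set \<Rightarrow> bool" where
  "maximal_clique V E K \<longleftrightarrow> clique V E K \<and> (\<forall>L. clique V E L \<and> K \<subseteq> L \<longrightarrow> L = K)"

definition strong_stable :: "'a set \<Rightarrow> ('a \<Rightarrow> 'a \<Rightarrow> bool) \<Rightarrow> 'a set \<Rightarrow> bool" where
  "strong_stable V E S \<longleftrightarrow> stable V E S \<and> (\<forall>K. maximal_clique V E K \<longrightarrow> S \<inter> K \<noteq> {})"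

text \<open>Contracting the vertices of X: delete them and add a new vertex (here None)
adjacent to every remaining vertex adjacent to at least one vertex of X.
Old vertices v are represented as Some v.\<close>

definition contract_V :: "'a set \<Rightarrow> 'a set \<Rightarrow> 'a option set" where
  "contract_V V X = insert None (Some ` (V - X))"

fun contract_E :: "'a set \<Rightarrow> ('a \<Rightarrow> 'a \<Rightarrow> bool) \<Rightarrow> 'a set \<Rightarrow> 'a option \<Rightarrow> 'a option \<Rightarrow> bool" where
  "contract_E V E X (Some u) (Some v) = E u v"
| "contract_E V E X None (Some v) = (v \<in> V - X \<and> (\<exists>x\<in>X. E x v))"
| "contract_E V E X (Some u) None = (u \<in> V - X \<and> (\<exists>x\<in>X. E x u))"
| "contract_E V E X None None = False"

definition induced_P4 :: "'b set \<Rightarrow> ('b \<Rightarrow> 'b \<Rightarrow> bool) \<Rightarrow> 'b \<Rightarrow> 'b \<Rightarrow> bool" where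
  "induced_P4 V E x y \<longleftrightarrow> (\<exists>a b. x \<in> V \<and> a \<in> V \<and> b \<in> V \<and> y \<in> V \<and>
     distinct [x, a, b, y] \<and> E x a \<and> E a b \<and> E b y \<and>
     \<not> E x b \<and> \<not> E a y \<and> \<not> E x y)"

text \<open>A nice stable set: a maximal stable set S with an ordering s (a list
s_1,...,s_k without repetitions) such that for every i in {2..k}, after contracting
s_1..s_(i-1) into w, there is no induced P4 with endpoints w and s_i.
With 0-based list indices: for every i with 1 <= i < k, contract take i s.\<close>

definition nice_stable :: "'a set \<Rightarrow> ('a \<Rightarrow> 'a \<Rightarrow> bool) \<Rightarrow> 'a set \<Rightarrow> 'a list \<Rightarrow> bool" where
  "nice_stable V E S s \<longleftrightarrow> maximal_stable V E S \<and> distinct s \<and> set s = S \<and>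
     (\<forall>i. 1 \<le> i \<and> i < length s \<longrightarrow>
        \<not> induced_P4 (contract_V V (set (take i s))) (contract_E V E (set (take i s)))
             None (Some (s ! i)))"

end

theory Submission
  imports Defs
begin

theorem lemma3:
  fixes V :: "'a set" and E :: "'a \<Rightarrow> 'a \<Rightarrow> bool" and S :: "'a set" and s :: "'a list"
  assumes "graph V E" and "V \<noteq> {}"
    and "nice_stable V E S s"
  shows "strong_stable V E S"
proof -
  have fin: "finite V" and sym: "\<And>x y. E x y \<Longrightarrow> E y x" and irr: "\<And>x. \<not> E x x"
    using assms(1) unfolding graph_def by auto
  have ms: "maximal_stable V E S" and dist: "distinct s" and setS: "set s = S"
    and nice: "\<And>i. 1 \<le> i \<Longrightarrow> i < length s \<Longrightarrow>
        \<not> induced_P4 (contract_V V (set (take i s))) (contract_E V E (set (take i s)))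
             None (Some (s ! i))"
    using assms(3) unfolding nice_stable_def by auto
  have SV: "S \<subseteq> V" and Sst: "\<And>x y. x \<in> S \<Longrightarrow> y \<in> S \<Longrightarrow> \<not> E x y"
    using ms unfolding maximal_stable_def stable_def by auto
  have Smax: "\<And>v. v \<in> V \<Longrightarrow> v \<notin> S \<Longrightarrow> \<exists>x\<in>S. E x v"
  proof (rule ccontr)
    fix v assume v: "v \<in> V" "v \<notin> S" and n: "\<not> (\<exists>x\<in>S. E x v)"
    have "stable V E (insert v S)"
      unfolding stable_def using v n SV Sst sym irr by blast
    then have "insert v S = S" using ms unfolding maximal_stable_def by blast
    then show False using v by blast
  qed
  show ?thesis unfolding strong_stable_def
  proof (intro conjI allI impI)
    show "stable V E S" using ms unfolding maximal_stable_def by auto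
  next
    fix K assume mK: "maximal_clique V E K"
    have KV: "K \<subseteq> V" and Kcl: "\<And>x y. x \<in> K \<Longrightarrow> y \<in> K \<Longrightarrow> x \<noteq> y \<Longrightarrow> E x y"
      using mK unfolding maximal_clique_def clique_def by auto
    have Kmax: "\<And>L. clique V E L \<Longrightarrow> K \<subseteq> L \<Longrightarrow> L = K"
      using mK unfolding maximal_clique_def by auto
    have Kne: "K \<noteq> {}"
    proof
      assume "K = {}"
      obtain v where "v \<in> V" using assms(2) by blast
      then have "clique V E {v}" unfolding clique_def by auto
      then show False using Kmax \<open>K = {}\<close> by blast
    qed
    show "S \<inter> K \<noteq> {}"
    proof
      assume dj: "S \<inter> K = {}"
      define P where "P j = (\<forall>v\<in>K. \<exists>x\<in>set (take j s). E x v)" for j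
      have Pl: "P (length s)" unfolding P_def using Smax KV dj setS by auto
      define j where "j = (LEAST j. P j)"
      have Pj: "P j" unfolding j_def using Pl by (rule LeastI)
      have jle: "j \<le> length s" unfolding j_def using Pl by (rule Least_le)
      have P0: "\<not> P 0" unfolding P_def using Kne by auto
      then have "j \<noteq> 0" using Pj by (cases j) auto
      then obtain m where jm: "j = Suc m" by (cases j) auto
      have nPm: "\<not> P m" using not_less_Least[of m P] jm unfolding j_def by auto
      have ml: "m < length s" using jle jm by auto
      have tk: "set (take (Suc m) s) = insert (s ! m) (set (take m s))"
        using ml by (simp add: take_Suc_conv_app_nth)
      have smS: "s ! m \<in> S" using ml setS by auto
      have smV: "s ! m \<in> V" using smS SV by auto
      have smnot: "s ! m \<notin> set (take m s)"
      proof -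
        have "distinct (take (Suc m) s)" using dist by simp
        then show ?thesis using ml by (simp add: take_Suc_conv_app_nth)
      qed
      obtain a where aK: "a \<in> K" and na: "\<not> E (s ! m) a"
      proof (rule ccontr)
        assume "\<not> thesis"
        then have "\<forall>a\<in>K. E (s ! m) a" using that by blast
        then have "clique V E (insert (s ! m) K)"
          unfolding clique_def using KV smV Kcl sym by auto
        then have "insert (s ! m) K = K" using Kmax by blast
        then show False using smS dj by blast
      qed
      obtain x where xin: "x \<in> set (take m s)" and xa: "E x a"
        using Pj jm aK tk na by (auto simp: P_def)
      have m1: "1 \<le> m" using xin by (cases m) auto
      obtain b where bK: "b \<in> K" and nb: "\<not> (\<exists>x\<in>set (take m s). E x b)"
        using nPm unfolding P_def by auto
      have bs: "E (s ! m) b" using Pj jm bK tk nb by (auto simp: P_def)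
      have ab: "a \<noteq> b" using na bs by auto
      let ?X = "set (take m s)"
      have XS: "?X \<subseteq> S" using setS by (metis set_take_subset)
      have "induced_P4 (contract_V V ?X) (contract_E V E ?X) None (Some (s ! m))"
        unfolding induced_P4_def
      proof (rule exI[of _ "Some a"], rule exI[of _ "Some b"], intro conjI)
        show "None \<in> contract_V V ?X" by (simp add: contract_V_def)
        show "Some a \<in> contract_V V ?X" using aK KV dj XS by (auto simp: contract_V_def)
        show "Some b \<in> contract_V V ?X" using bK KV dj XS by (auto simp: contract_V_def)
        show "Some (s ! m) \<in> contract_V V ?X" using smV smnot by (auto simp: contract_V_def)
        show "distinct [None, Some a, Some b, Some (s ! m)]"
          using ab aK bK smS dj by auto
        show "contract_E V E ?X None (Some a)" using aK KV dj XS xin xa by auto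
        show "contract_E V E ?X (Some a) (Some b)" using Kcl aK bK ab by simp
        show "contract_E V E ?X (Some b) (Some (s ! m))" using bs sym by simp
        show "\<not> contract_E V E ?X None (Some b)" using nb by simp
        show "\<not> contract_E V E ?X (Some a) (Some (s ! m))" using na sym by auto
        show "\<not> contract_E V E ?X None (Some (s ! m))" using XS smS Sst by auto
      qed
      then show False using nice[OF m1 ml] by simp
    qed
  qed
qed

end
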